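(* Let $\ell$ be a positive integer and let $p_1,\dots,p_\ell$ be integers with $j\le p_j\le j(j+1)$ for all $j$ such that the $\ell\times\ell$ matrix $A$ with $A_{ij}=C_{p_j}(i)$ ($i,j\in[\ell]$) is invertible. Let $\mathbf x^\star$ be the solution of $A\mathbf x=\mathbf y$ where $y_i=i$ for $i\in[\ell]$. Then $|x^\star_i|\le\ell^{O(\ell^4)}$ for all $i$.
   Context: For a positive integer $p$ and $y\ge0$, $C_p(y)=p\,(1-(1-1/p)^y)$. *)

theory Defs
  imports Complex_Main "Jordan_Normal_Form.Matrix"
begin

definition Cfun :: "nat \<Rightarrow> nat \<Rightarrow> real" where
  "Cfun p y = real p * (1 - (1 - 1 / real p) ^ y)"

text \<open>The l x l matrix A with A_{ij} = C_{p_j}(i), i,j in [l] (stored 0-indexed).\<close>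
definition Amat :: "nat \<Rightarrow> (nat \<Rightarrow> nat) \<Rightarrow> real mat" where
  "Amat l p = mat l l (\<lambda>(i, j). Cfun (p (j + 1)) (i + 1))"

definition yvec :: "nat \<Rightarrow> real vec" where
  "yvec l = vec l (\<lambda>i. real (i + 1))"

end

theory Submission imports Defs "Jordan_Normal_Form.Determinant" begin
lemma det_bound:
  fixes A :: "real mat"
  assumes A: "A \<in> carrier_mat n n" and b: "\<And>i j. i < n \<Longrightarrow> j < n \<Longrightarrow> \<bar>A $$ (i,j)\<bar> \<le> B"
  shows "\<bar>det A\<bar> \<le> fact n * B ^ n"
proof -
  have "\<bar>det A\<bar> = \<bar>\<Sum>p\<in>{p. p permutes {0..<n}}. signof p * (\<Prod>i = 0..<n. A $$ (i, p i))\<bar>"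
    using det_def'[OF A] by simp
  also have "\<dots> \<le> (\<Sum>p\<in>{p. p permutes {0..<n}}. \<bar>signof p * (\<Prod>i = 0..<n. A $$ (i, p i))\<bar>)"
    by (rule sum_abs)
  also have "\<dots> \<le> (\<Sum>p\<in>{p. p permutes {0..<n}}. B ^ n)"
  proof (rule sum_mono)
    fix p assume "p \<in> {p. p permutes {0..<n}}"
    hence pp: "p permutes {0..<n}" by simp
    have "\<bar>signof p * (\<Prod>i = 0..<n. A $$ (i, p i))\<bar> = (\<Prod>i = 0..<n. \<bar>A $$ (i, p i)\<bar>)"
      by (simp add: abs_mult abs_prod sign_def)
    also have "\<dots> \<le> (\<Prod>i = 0..<n. B)"
      by (rule prod_mono) (use b permutes_in_image[OF pp] in auto)
    finally show "\<bar>signof p * (\<Prod>i = 0..<n. A $$ (i, p i))\<bar> \<le> B ^ n" by simp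
  qed
  also have "\<dots> = fact n * B ^ n"
    using card_permutations[of "{0..<n}" n] by simp
  finally show ?thesis .
qed

lemma det_colscale:
  fixes A :: "'a::comm_ring_1 mat"
  assumes A: "A \<in> carrier_mat n n"
  shows "det (mat n n (\<lambda>(i,j). A $$ (i,j) * f j)) = det A * (\<Prod>j<n. f j)"
proof -
  have "det (mat n n (\<lambda>(i,j). A $$ (i,j) * f j)) =
     (\<Sum>p\<in>{p. p permutes {0..<n}}. signof p * (\<Prod>i = 0..<n. A $$ (i, p i) * f (p i)))"
    by (subst det_def'[of _ n]) (auto intro!: sum.cong prod.cong permutes_in_image)
  also have "\<dots> = (\<Sum>p\<in>{p. p permutes {0..<n}}. signof p * (\<Prod>i = 0..<n. A $$ (i, p i)) * (\<Prod>j<n. f j))"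
  proof (rule sum.cong[OF refl])
    fix p assume "p \<in> {p. p permutes {0..<n}}"
    hence pp: "p permutes {0..<n}" by simp
    have "(\<Prod>i = 0..<n. f (p i)) = (\<Prod>j\<in>{0..<n}. f j)"
      using prod.permute[OF pp, of f] by (simp add: comp_def)
    also have "\<dots> = (\<Prod>j<n. f j)" by (simp add: atLeast0LessThan)
    finally show "signof p * (\<Prod>i = 0..<n. A $$ (i, p i) * f (p i)) = signof p * (\<Prod>i = 0..<n. A $$ (i, p i)) * (\<Prod>j<n. f j)"
      by (simp add: prod.distrib mult.assoc)
  qed
  also have "\<dots> = det A * (\<Prod>j<n. f j)"
    by (simp add: det_def'[OF A] sum_distrib_right)
  finally show ?thesis .
qed

lemma Cfun_bounds:
  assumes "q \<ge> 1"
  shows "0 \<le> Cfun q y" "Cfun q y \<le> real y"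
proof -
  have q: "real q \<ge> 1" using assms by simp
  have a: "0 \<le> 1 - 1 / real q" "1 - 1 / real q \<le> 1" using q by (auto simp: field_simps)
  have "(1 - 1 / real q) ^ y \<le> 1" using a by (simp add: power_le_one)
  thus "0 \<le> Cfun q y" unfolding Cfun_def using q by simp
  have "1 + real y * (- (1 / real q)) \<le> (1 + - (1 / real q)) ^ y"
    by (rule Bernoulli_inequality) (use q in \<open>auto simp: field_simps\<close>)
  hence "1 - (1 - 1 / real q) ^ y \<le> real y / real q" by simp
  hence "real q * (1 - (1 - 1 / real q) ^ y) \<le> real q * (real y / real q)"
    by (rule mult_left_mono) (use q in auto)
  thus "Cfun q y \<le> real y" unfolding Cfun_def using q by simp
qed

lemma Cfun_int:
  assumes "q \<ge> 1" "i < l"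
  shows "Cfun q (i+1) * real q ^ (l - 1) =
     real_of_int (int q ^ (l - 1 - i) * (int q ^ (i+1) - (int q - 1) ^ (i+1)))"
proof -
  define r where "r = real q"
  have q: "r > 0" using assms by (simp add: r_def)
  have e1: "1 - 1/r = (r-1)/r" using q by (simp add: field_simps)
  have l: "l - 1 = (l - 1 - i) + i" using assms by simp
  have e2: "r^(l-1) = r^(l-1-i) * r^i" by (subst l) (rule power_add)
  have e3: "r * (1 - ((r-1)/r)^(i+1)) * r^i = r^(i+1) - (r-1)^(i+1)"
  proof -
    have "((r-1)/r)^(i+1) = (r-1)^(i+1) / (r * r^i)" by (simp add: power_divide)
    moreover have "r * r^i \<noteq> 0" using q by simp
    ultimately have "r * (1 - ((r-1)/r)^(i+1)) * r^i = r * r^i - (r * r^i) * ((r-1)^(i+1) / (r * r^i))"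
      by (simp only: algebra_simps)
    also have "(r * r^i) * ((r-1)^(i+1) / (r * r^i)) = (r-1)^(i+1)"
      using \<open>r * r^i \<noteq> 0\<close> by simp
    finally have "r * (1 - ((r-1)/r)^(i+1)) * r^i = r * r^i - (r-1)^(i+1)" .
    thus ?thesis by simp
  qed
  have "Cfun q (i+1) * real q ^ (l - 1) = r^(l-1-i) * (r * (1 - ((r-1)/r)^(i+1)) * r^i)"
    unfolding Cfun_def r_def[symmetric] e1 e2 by (simp only: mult_ac)
  also have "\<dots> = r^(l-1-i) * (r^(i+1) - (r-1)^(i+1))" by (simp only: e3)
  also have "\<dots> = real_of_int (int q ^ (l - 1 - i) * (int q ^ (i+1) - (int q - 1) ^ (i+1)))"
    by (simp add: r_def)
  finally show ?thesis .
qed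

lemma main_bound:
  fixes l :: nat and p :: "nat \<Rightarrow> nat" and x :: "real vec"
  assumes l1: "l \<ge> 1"
    and hp: "\<forall>j\<in>{1..l}. j \<le> p j \<and> p j \<le> j * (j + 1)"
    and inv: "invertible_mat (Amat l p)"
    and dx: "dim_vec x = l"
    and eq: "Amat l p *\<^sub>v x = yvec l"
    and il: "i < l"
  shows "\<bar>x $ i\<bar> \<le> real l ^ (5 * l ^ 4)"
proof -
  define A where "A = Amat l p"
  have A: "A \<in> carrier_mat l l" by (simp add: A_def Amat_def)
  have Aent: "A $$ (a,b) = Cfun (p (b+1)) (a+1)" if "a < l" "b < l" for a b
    using that by (simp add: A_def Amat_def)
  have pge: "p (b+1) \<ge> 1" "p (b+1) \<le> l*(l+1)" if "b < l" for b
  proof -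
    have "b+1 \<in> {1..l}" using that by simp
    with hp have h0: "b+1 \<le> p (b+1) \<and> p (b+1) \<le> (b+1)*(b+1+1)" by blast
    hence h: "b+1 \<le> p (b+1)" "p (b+1) \<le> (b+1)*(b+1+1)" by (auto simp only:)
    thus "p (b+1) \<ge> 1" by simp
    have "(b+1)*(b+1+1) \<le> l*(l+1)" using that by (intro mult_le_mono) auto
    with h show "p (b+1) \<le> l*(l+1)" by simp
  qed
  have x: "x \<in> carrier_vec l" using dx by (rule carrier_vecI)
  have cr: "det (replace_col A (A *\<^sub>v x) i) = x $ i * det A"
    by (rule cramer_lemma_mat[OF A x il])
  define R where "R = replace_col A (yvec l) i"
  have R: "R \<in> carrier_mat l l" using A by (simp add: R_def replace_col_def)
  have Rb: "\<bar>R $$ (a,b)\<bar> \<le> real l" if "a < l" "b < l" for a b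
  proof (cases "b = i")
    case True thus ?thesis using that A by (simp add: R_def replace_col_def yvec_def)
  next
    case False
    have "0 \<le> Cfun (p (b+1)) (a+1)" "Cfun (p (b+1)) (a+1) \<le> real (a+1)"
      by (rule Cfun_bounds[OF pge(1)[OF that(2)]])+
    thus ?thesis using False that A by (simp add: R_def replace_col_def Aent)
  qed
  have detR: "\<bar>det R\<bar> \<le> fact l * real l ^ l" by (rule det_bound[OF R Rb])
  have xdet: "det R = x $ i * det A" using cr eq by (simp add: R_def A_def)
  have dA: "det A \<noteq> 0"
  proof -
    from inv obtain B where AB: "A * B = 1\<^sub>m l" and BA: "B * A = 1\<^sub>m (dim_row B)"
      unfolding invertible_mat_def inverts_mat_def A_def using A A_def by auto
    have "dim_row B = l" using arg_cong[OF BA, of dim_col] A by simp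
    moreover have "dim_col B = l" using arg_cong[OF AB, of dim_col] by simp
    ultimately have B: "B \<in> carrier_mat l l" by auto
    have "det A * det B = 1" using arg_cong[OF AB, of det] det_mult[OF A B] by simp
    thus ?thesis by auto
  qed
  define q where "q b = p (b+1)" for b
  define M :: "int mat" where "M = mat l l (\<lambda>(a,b). int (q b) ^ (l - 1 - a) * (int (q b) ^ (a+1) - (int (q b) - 1) ^ (a+1)))"
  have Meq: "map_mat real_of_int M = mat l l (\<lambda>(a,b). A $$ (a,b) * real (q b) ^ (l-1))"
  proof (rule eq_matI)
    fix a b assume ab: "a < dim_row (mat l l (\<lambda>(a,b). A $$ (a,b) * real (q b) ^ (l-1)))"
      "b < dim_col (mat l l (\<lambda>(a,b). A $$ (a,b) * real (q b) ^ (l-1)))"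
    hence ab': "a < l" "b < l" by auto
    show "map_mat real_of_int M $$ (a, b) = mat l l (\<lambda>(a,b). A $$ (a,b) * real (q b) ^ (l-1)) $$ (a, b)"
      using ab' Cfun_int[OF pge(1)[OF ab'(2)] ab'(1)] by (simp add: M_def Aent q_def)
  qed (auto simp: M_def)
  define P where "P = (\<Prod>b<l. real (q b) ^ (l-1))"
  have Ppos: "P > 0" unfolding P_def using pge(1) by (intro prod_pos) (force simp: q_def)
  have "real_of_int (det M) = det (map_mat real_of_int M)" by (rule of_int_hom.hom_det[symmetric])
  also have "\<dots> = det (mat l l (\<lambda>(a,b). A $$ (a,b) * real (q b) ^ (l-1)))" by (simp only: Meq)
  also have "\<dots> = det A * P" unfolding P_def by (rule det_colscale[OF A])
  finally have dMP: "real_of_int (det M) = det A * P" .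
  hence dM: "det M \<noteq> 0" using dA Ppos by auto
  have "(1::int) \<le> \<bar>det M\<bar>" using dM by linarith
  hence "1 \<le> \<bar>real_of_int (det M)\<bar>" by (metis of_int_1_le_iff of_int_abs)
  hence dAP: "1 \<le> \<bar>det A\<bar> * P" using \<open>real_of_int (det M) = det A * P\<close> Ppos by (simp add: abs_mult)
  have "\<bar>x $ i\<bar> * 1 \<le> \<bar>x $ i\<bar> * (\<bar>det A\<bar> * P)" by (rule mult_left_mono[OF dAP]) simp
  hence "\<bar>x $ i\<bar> \<le> \<bar>x $ i\<bar> * (\<bar>det A\<bar> * P)" by simp
  also have "\<dots> = \<bar>det R\<bar> * P" using xdet Ppos by (simp add: abs_mult)
  also have "\<dots> \<le> (fact l * real l ^ l) * P" using detR Ppos by simp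
  also have "P \<le> ((real l ^ 3) ^ (l-1)) ^ l"
  proof -
    have "P \<le> (\<Prod>b<l. (real l ^ 3) ^ (l-1))" unfolding P_def
    proof (rule prod_mono)
      fix b assume "b \<in> {..<l}"
      hence b: "b < l" by simp
      show "0 \<le> real (q b) ^ (l-1) \<and> real (q b) ^ (l-1) \<le> (real l ^ 3) ^ (l-1)"
      proof (cases "l = 1")
        case True thus ?thesis by simp
      next
        case False
        hence "l \<ge> 2" using l1 by simp
        hence "l * 2 \<le> l * l" by (rule mult_le_mono2)
        hence "l + 1 \<le> l * l" using \<open>l \<ge> 2\<close> by linarith
        hence "l * (l+1) \<le> l * (l * l)" by (rule mult_le_mono2)
        hence "l * (l+1) \<le> l^3" by (simp only: power3_eq_cube mult.assoc)
        hence "q b \<le> l^3" using pge(2)[OF b] by (simp add: q_def)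
        hence "real (q b) \<le> real l ^ 3" by (metis of_nat_le_iff of_nat_power)
        thus ?thesis by (simp add: power_mono)
      qed
    qed
    thus ?thesis by simp
  qed
  hence "(fact l * real l ^ l) * P \<le> (fact l * real l ^ l) * ((real l ^ 3) ^ (l-1)) ^ l"
    by (intro mult_left_mono) auto
  also have "\<dots> \<le> (real l ^ l * real l ^ l) * ((real l ^ 3) ^ (l-1)) ^ l"
    using fact_le_power[of l, where 'a=real] by (intro mult_right_mono mult_right_mono) auto
  also have "\<dots> = real l ^ (l + l + 3*(l-1)*l)"
    by (simp only: power_add power_mult)
  also have "\<dots> \<le> real l ^ (5 * l ^ 4)"
  proof (rule power_increasing)
    show "1 \<le> real l" using l1 by simp
    have "l^1 \<le> l^4" using l1 by (intro power_increasing) auto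
    hence a: "l \<le> l^4" by simp
    have "l^2 \<le> l^4" using l1 by (intro power_increasing) auto
    hence b: "l * l \<le> l^4" by (simp add: power2_eq_square)
    have c: "(l-1)*l \<le> l * l" by simp
    have d: "3*(l-1)*l = 3*((l-1)*l)" by simp
    show "l + l + 3*(l-1)*l \<le> 5 * l^4"
      unfolding d using a b c by linarith
  qed
  finally show ?thesis by simp
qed

theorem lemma11:
  "\<exists>c::real. c > 0 \<and>
     (\<forall>(l::nat) (p::nat \<Rightarrow> nat) (x::real vec).
        l \<ge> 1 \<longrightarrow>
        (\<forall>j\<in>{1..l}. j \<le> p j \<and> p j \<le> j * (j + 1)) \<longrightarrow>
        invertible_mat (Amat l p) \<longrightarrow>
        dim_vec x = l \<longrightarrow>
        Amat l p *\<^sub>v x = yvec l \<longrightarrow>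
        (\<forall>i<l. \<bar>x $ i\<bar> \<le> real l powr (c * real l ^ 4)))"
proof (rule exI[of _ 5], intro conjI allI impI)
  fix l p x i
  assume h: "1 \<le> l" "\<forall>j\<in>{1..l}. j \<le> p j \<and> p j \<le> j * (j + 1)" "invertible_mat (Amat l p)"
     "dim_vec x = (l::nat)" "Amat l p *\<^sub>v x = yvec l" "i < l"
  have "real l powr (5 * real l ^ 4) = real l powr (real (5 * l ^ 4))" by simp
  also have "\<dots> = real l ^ (5 * l ^ 4)" using h(1) by (intro powr_realpow) simp
  finally show "\<bar>x $ i\<bar> \<le> real l powr (5 * real l ^ 4)"
    using main_bound[OF h] by simp
qed simp

end
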